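(* Let $R$ be a commutative ring with identity and $M$ a non-zero comultiplication $R$-module with $G'(M)$ non-null. (i) $G'(M)$ has a pendent vertex (a vertex with exactly one neighbour) if and only if $|\mathrm{Min}(M)|=2$ and $G'(M)$ is the disjoint union of two complete subgraphs $G'_1,G'_2$ with no edges between them such that $|V(G'_i)|=2$ for some $i\in\{1,2\}$. (ii) $G'(M)$ is not a star graph.
   Context: An $R$-module $M$ is a comultiplication module if for every submodule $N$ of $M$ there is an ideal $I$ of $R$ with $N=\mathrm{Ann}_M(I)$. A submodule $N$ of $M$ is large if $N\cap L\neq 0$ for every non-zero submodule $L$ of $M$. $\mathrm{Min}(M)$ is the set of minimal submodules of $M$. The large sum graph $G'(M)$ has as vertex set the set of all non-zero non-large submodules of $M$, and two distinct vertices $N,K$ are adjacent iff $N+K$ is non-large in $M$. A star graph is a complete bipartite graph $K_{1,n}$ (one part of size 1). *)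

theory Defs
  imports "HOL-Algebra.Module" "HOL-Algebra.AbelCoset" "HOL-Algebra.Ideal"
begin

definition ann_M :: "('a, 'b) ring_scheme \<Rightarrow> ('a, 'c, 'd) module_scheme \<Rightarrow> 'a set \<Rightarrow> 'c set" where
  "ann_M R M I = {m \<in> carrier M. \<forall>a\<in>I. a \<odot>\<^bsub>M\<^esub> m = \<zero>\<^bsub>M\<^esub>}"

definition comultiplication_module :: "('a, 'b) ring_scheme \<Rightarrow> ('a, 'c, 'd) module_scheme \<Rightarrow> bool" where
  "comultiplication_module R M \<longleftrightarrow> module R M \<and>
     (\<forall>N. submodule N R M \<longrightarrow> (\<exists>I. ideal I R \<and> N = ann_M R M I))"

definition large_submodule :: "('a, 'b) ring_scheme \<Rightarrow> ('a, 'c, 'd) module_scheme \<Rightarrow> 'c set \<Rightarrow> bool" where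
  "large_submodule R M N \<longleftrightarrow> submodule N R M \<and>
     (\<forall>L. submodule L R M \<and> L \<noteq> {\<zero>\<^bsub>M\<^esub>} \<longrightarrow> N \<inter> L \<noteq> {\<zero>\<^bsub>M\<^esub>})"

definition Min_sub :: "('a, 'b) ring_scheme \<Rightarrow> ('a, 'c, 'd) module_scheme \<Rightarrow> 'c set set" where
  "Min_sub R M = {N. submodule N R M \<and> N \<noteq> {\<zero>\<^bsub>M\<^esub>} \<and>
     (\<forall>L. submodule L R M \<and> L \<subseteq> N \<longrightarrow> L = {\<zero>\<^bsub>M\<^esub>} \<or> L = N)}"

definition LS_vertices :: "('a, 'b) ring_scheme \<Rightarrow> ('a, 'c, 'd) module_scheme \<Rightarrow> 'c set set" where
  "LS_vertices R M = {N. submodule N R M \<and> N \<noteq> {\<zero>\<^bsub>M\<^esub>} \<and> \<not> large_submodule R M N}"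

definition LS_adj :: "('a, 'b) ring_scheme \<Rightarrow> ('a, 'c, 'd) module_scheme \<Rightarrow> 'c set \<Rightarrow> 'c set \<Rightarrow> bool" where
  "LS_adj R M N K \<longleftrightarrow> N \<in> LS_vertices R M \<and> K \<in> LS_vertices R M \<and> N \<noteq> K \<and>
     \<not> large_submodule R M (set_add M N K)"

definition non_null_graph :: "'v set \<Rightarrow> bool" where
  "non_null_graph V \<longleftrightarrow> V \<noteq> {}"

definition pendent_vertex :: "'v set \<Rightarrow> ('v \<Rightarrow> 'v \<Rightarrow> bool) \<Rightarrow> 'v \<Rightarrow> bool" where
  "pendent_vertex V E v \<longleftrightarrow> v \<in> V \<and> (\<exists>!w. w \<in> V \<and> E v w)"

definition complete_on :: "'v set \<Rightarrow> ('v \<Rightarrow> 'v \<Rightarrow> bool) \<Rightarrow> bool" where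
  "complete_on A E \<longleftrightarrow> (\<forall>x\<in>A. \<forall>y\<in>A. x \<noteq> y \<longrightarrow> E x y)"

definition two_complete_components :: "'v set \<Rightarrow> ('v \<Rightarrow> 'v \<Rightarrow> bool) \<Rightarrow> 'v set \<Rightarrow> 'v set \<Rightarrow> bool" where
  "two_complete_components V E V1 V2 \<longleftrightarrow>
     V1 \<noteq> {} \<and> V2 \<noteq> {} \<and> V1 \<inter> V2 = {} \<and> V1 \<union> V2 = V \<and>
     complete_on V1 E \<and> complete_on V2 E \<and>
     (\<forall>x\<in>V1. \<forall>y\<in>V2. \<not> E x y \<and> \<not> E y x)"

definition star_graph :: "'v set \<Rightarrow> ('v \<Rightarrow> 'v \<Rightarrow> bool) \<Rightarrow> bool" where
  "star_graph V E \<longleftrightarrow> (\<exists>c\<in>V. V - {c} \<noteq> {} \<and>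
     (\<forall>x\<in>V - {c}. E c x \<and> E x c) \<and>
     (\<forall>x\<in>V - {c}. \<forall>y\<in>V - {c}. \<not> E x y))"

end

theory Submission
  imports Defs
begin

context module begin

lemma sm_sub: "submodule N R M \<Longrightarrow> N \<subseteq> carrier M"
  using submoduleE(1) by blast
lemma sm_zero: "submodule N R M \<Longrightarrow> \<zero>\<^bsub>M\<^esub> \<in> N"
  using subgroup.one_closed[OF submodule.axioms(1)] by simp
lemma sm_add: "submodule N R M \<Longrightarrow> a \<in> N \<Longrightarrow> b \<in> N \<Longrightarrow> a \<oplus>\<^bsub>M\<^esub> b \<in> N"
  using submoduleE(5) by blast
lemma sm_neg: "submodule N R M \<Longrightarrow> a \<in> N \<Longrightarrow> \<ominus>\<^bsub>M\<^esub> a \<in> N"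
  using submoduleE(3) by blast
lemma sm_smult: "submodule N R M \<Longrightarrow> r \<in> carrier R \<Longrightarrow> a \<in> N \<Longrightarrow> r \<odot>\<^bsub>M\<^esub> a \<in> N"
  using submoduleE(4) by blast

lemma zero_sm: "submodule {\<zero>\<^bsub>M\<^esub>} R M"
  by (rule submoduleI) auto

lemma set_add_mem: "set_add M N K = {n \<oplus>\<^bsub>M\<^esub> k | n k. n \<in> N \<and> k \<in> K}"
  unfolding set_add_def' by blast

lemma sum_sm:
  assumes N: "submodule N R M" and K: "submodule K R M"
  shows "submodule (set_add M N K) R M"
proof (rule submoduleI)
  note sN = sm_sub[OF N] and sK = sm_sub[OF K]
  show "set_add M N K \<subseteq> carrier M" using sN sK by (auto simp: set_add_mem)
  show "\<zero>\<^bsub>M\<^esub> \<in> set_add M N K" unfolding set_add_mem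
    using sm_zero[OF N] sm_zero[OF K] by force
  show "\<ominus>\<^bsub>M\<^esub> a \<in> set_add M N K" if "a \<in> set_add M N K" for a
  proof -
    from that obtain n k where a: "a = n \<oplus>\<^bsub>M\<^esub> k" "n \<in> N" "k \<in> K" by (auto simp: set_add_mem)
    hence "\<ominus>\<^bsub>M\<^esub> a = \<ominus>\<^bsub>M\<^esub> n \<oplus>\<^bsub>M\<^esub> \<ominus>\<^bsub>M\<^esub> k" using sN sK M.minus_add by blast
    thus ?thesis using a sm_neg[OF N, of n] sm_neg[OF K, of k] unfolding set_add_mem by blast
  qed
  show "a \<oplus>\<^bsub>M\<^esub> b \<in> set_add M N K" if "a \<in> set_add M N K" "b \<in> set_add M N K" for a b
  proof -
    from that obtain n k n' k' where a: "a = n \<oplus>\<^bsub>M\<^esub> k" "n \<in> N" "k \<in> K"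
      and b: "b = n' \<oplus>\<^bsub>M\<^esub> k'" "n' \<in> N" "k' \<in> K" by (auto simp: set_add_mem)
    hence "a \<oplus>\<^bsub>M\<^esub> b = (n \<oplus>\<^bsub>M\<^esub> n') \<oplus>\<^bsub>M\<^esub> (k \<oplus>\<^bsub>M\<^esub> k')"
      using sN sK by (simp add: subsetD M.a_ac)
    thus ?thesis using a b sm_add[OF N, of n n'] sm_add[OF K, of k k'] unfolding set_add_mem by blast
  qed
  show "r \<odot>\<^bsub>M\<^esub> a \<in> set_add M N K" if "r \<in> carrier R" "a \<in> set_add M N K" for r a
  proof -
    from that obtain n k where a: "a = n \<oplus>\<^bsub>M\<^esub> k" "n \<in> N" "k \<in> K" by (auto simp: set_add_mem)
    hence "r \<odot>\<^bsub>M\<^esub> a = r \<odot>\<^bsub>M\<^esub> n \<oplus>\<^bsub>M\<^esub> r \<odot>\<^bsub>M\<^esub> k"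
      using sN sK that(1) smult_r_distr by blast
    thus ?thesis using a that(1) sm_smult[OF N, of r n] sm_smult[OF K, of r k] unfolding set_add_mem by blast
  qed
qed

lemma sum_comm:
  assumes "submodule N R M" "submodule K R M" shows "set_add M N K = set_add M K N"
proof -
  have "set_add M A B \<subseteq> set_add M B A" if "A \<subseteq> carrier M" "B \<subseteq> carrier M" for A B
  proof
    fix x assume "x \<in> set_add M A B"
    then obtain a b where ab: "x = a \<oplus>\<^bsub>M\<^esub> b" "a \<in> A" "b \<in> B" unfolding set_add_mem by blast
    hence "x = b \<oplus>\<^bsub>M\<^esub> a" using that M.a_comm by (metis subsetD)
    thus "x \<in> set_add M B A" using ab unfolding set_add_mem by blast
  qed
  thus ?thesis using sm_sub[OF assms(1)] sm_sub[OF assms(2)] by blast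
qed

lemma sum_upper1:
  assumes "submodule N R M" "submodule K R M" shows "N \<subseteq> set_add M N K"
proof
  fix x assume x: "x \<in> N"
  hence "x = x \<oplus>\<^bsub>M\<^esub> \<zero>\<^bsub>M\<^esub>" using sm_sub[OF assms(1)] M.r_zero by (metis subsetD)
  thus "x \<in> set_add M N K" using x sm_zero[OF assms(2)] unfolding set_add_mem by blast
qed

lemma sum_upper2: "submodule N R M \<Longrightarrow> submodule K R M \<Longrightarrow> K \<subseteq> set_add M N K"
  using sum_comm sum_upper1 by metis

lemma sum_least: "submodule X R M \<Longrightarrow> N \<subseteq> X \<Longrightarrow> K \<subseteq> X \<Longrightarrow> set_add M N K \<subseteq> X"
  unfolding set_add_mem using sm_add by blast

lemma cyc_sm:
  assumes z: "z \<in> carrier M"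
  shows "submodule ((\<lambda>a. a \<odot>\<^bsub>M\<^esub> z) ` carrier R) R M"
proof (rule submoduleI)
  show "(\<lambda>a. a \<odot>\<^bsub>M\<^esub> z) ` carrier R \<subseteq> carrier M" using z by auto
  have "\<zero>\<^bsub>M\<^esub> = \<zero>\<^bsub>R\<^esub> \<odot>\<^bsub>M\<^esub> z" using z by simp
  thus "\<zero>\<^bsub>M\<^esub> \<in> (\<lambda>a. a \<odot>\<^bsub>M\<^esub> z) ` carrier R" by blast
  show "\<ominus>\<^bsub>M\<^esub> x \<in> (\<lambda>a. a \<odot>\<^bsub>M\<^esub> z) ` carrier R" if "x \<in> (\<lambda>a. a \<odot>\<^bsub>M\<^esub> z) ` carrier R" for x
  proof -
    from that obtain a where a: "a \<in> carrier R" "x = a \<odot>\<^bsub>M\<^esub> z" by blast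
    hence "\<ominus>\<^bsub>M\<^esub> x = (\<ominus>\<^bsub>R\<^esub> a) \<odot>\<^bsub>M\<^esub> z" using z smult_l_minus by simp
    moreover have "\<ominus>\<^bsub>R\<^esub> a \<in> carrier R" using a by simp
    ultimately show ?thesis by blast
  qed
  show "x \<oplus>\<^bsub>M\<^esub> y \<in> (\<lambda>a. a \<odot>\<^bsub>M\<^esub> z) ` carrier R"
    if "x \<in> (\<lambda>a. a \<odot>\<^bsub>M\<^esub> z) ` carrier R" "y \<in> (\<lambda>a. a \<odot>\<^bsub>M\<^esub> z) ` carrier R" for x y
  proof -
    from that obtain a b where a: "a \<in> carrier R" "x = a \<odot>\<^bsub>M\<^esub> z" "b \<in> carrier R" "y = b \<odot>\<^bsub>M\<^esub> z" by blast
    hence "x \<oplus>\<^bsub>M\<^esub> y = (a \<oplus>\<^bsub>R\<^esub> b) \<odot>\<^bsub>M\<^esub> z" using z smult_l_distr by simp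
    moreover have "a \<oplus>\<^bsub>R\<^esub> b \<in> carrier R" using a by simp
    ultimately show ?thesis by blast
  qed
  show "r \<odot>\<^bsub>M\<^esub> x \<in> (\<lambda>a. a \<odot>\<^bsub>M\<^esub> z) ` carrier R" if "r \<in> carrier R" "x \<in> (\<lambda>a. a \<odot>\<^bsub>M\<^esub> z) ` carrier R" for r x
  proof -
    from that obtain a where a: "a \<in> carrier R" "x = a \<odot>\<^bsub>M\<^esub> z" by blast
    hence "r \<odot>\<^bsub>M\<^esub> x = (r \<otimes>\<^bsub>R\<^esub> a) \<odot>\<^bsub>M\<^esub> z" using z that(1) smult_assoc1 by simp
    moreover have "r \<otimes>\<^bsub>R\<^esub> a \<in> carrier R" using a that(1) by simp
    ultimately show ?thesis by blast
  qed
qed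

lemma img_sm:
  assumes N: "submodule N R M" and a: "a \<in> carrier R"
  shows "submodule ((\<lambda>u. a \<odot>\<^bsub>M\<^esub> u) ` N) R M"
proof (rule submoduleI)
  note sN = sm_sub[OF N]
  show "(\<lambda>u. a \<odot>\<^bsub>M\<^esub> u) ` N \<subseteq> carrier M" using sN a by auto
  have "\<zero>\<^bsub>M\<^esub> = a \<odot>\<^bsub>M\<^esub> \<zero>\<^bsub>M\<^esub>" using a by simp
  thus "\<zero>\<^bsub>M\<^esub> \<in> (\<lambda>u. a \<odot>\<^bsub>M\<^esub> u) ` N" using sm_zero[OF N] by blast
  show "\<ominus>\<^bsub>M\<^esub> x \<in> (\<lambda>u. a \<odot>\<^bsub>M\<^esub> u) ` N" if "x \<in> (\<lambda>u. a \<odot>\<^bsub>M\<^esub> u) ` N" for x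
  proof -
    from that obtain u where u: "u \<in> N" "x = a \<odot>\<^bsub>M\<^esub> u" by blast
    hence "\<ominus>\<^bsub>M\<^esub> x = a \<odot>\<^bsub>M\<^esub> (\<ominus>\<^bsub>M\<^esub> u)" using a sN smult_r_minus by auto
    thus ?thesis using sm_neg[OF N u(1)] by blast
  qed
  show "x \<oplus>\<^bsub>M\<^esub> y \<in> (\<lambda>u. a \<odot>\<^bsub>M\<^esub> u) ` N"
    if "x \<in> (\<lambda>u. a \<odot>\<^bsub>M\<^esub> u) ` N" "y \<in> (\<lambda>u. a \<odot>\<^bsub>M\<^esub> u) ` N" for x y
  proof -
    from that obtain u v where u: "u \<in> N" "x = a \<odot>\<^bsub>M\<^esub> u" "v \<in> N" "y = a \<odot>\<^bsub>M\<^esub> v" by blast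
    hence "x \<oplus>\<^bsub>M\<^esub> y = a \<odot>\<^bsub>M\<^esub> (u \<oplus>\<^bsub>M\<^esub> v)" using a subsetD[OF sN u(1)] subsetD[OF sN u(3)] smult_r_distr[of a u v] by simp
    thus ?thesis using sm_add[OF N u(1) u(3)] by blast
  qed
  show "r \<odot>\<^bsub>M\<^esub> x \<in> (\<lambda>u. a \<odot>\<^bsub>M\<^esub> u) ` N" if "r \<in> carrier R" "x \<in> (\<lambda>u. a \<odot>\<^bsub>M\<^esub> u) ` N" for r x
  proof -
    from that obtain u where u: "u \<in> N" "x = a \<odot>\<^bsub>M\<^esub> u" by auto
    have "r \<odot>\<^bsub>M\<^esub> x = (r \<otimes>\<^bsub>R\<^esub> a) \<odot>\<^bsub>M\<^esub> u" using u that(1) a sN smult_assoc1 by auto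
    also have "\<dots> = (a \<otimes>\<^bsub>R\<^esub> r) \<odot>\<^bsub>M\<^esub> u" using that(1) a R.m_comm by simp
    also have "\<dots> = a \<odot>\<^bsub>M\<^esub> (r \<odot>\<^bsub>M\<^esub> u)" using u that(1) a sN smult_assoc1 by auto
    finally show ?thesis using sm_smult[OF N that(1) u(1)] by blast
  qed
qed

lemma min_prime:
  assumes C: "comultiplication_module R M" and S: "S \<in> Min_sub R M"
    and X: "submodule X R M" and Y: "submodule Y R M" and sub: "S \<subseteq> set_add M X Y"
  shows "S \<subseteq> X \<or> S \<subseteq> Y"
proof (rule ccontr)
  assume nt: "\<not> (S \<subseteq> X \<or> S \<subseteq> Y)"
  have Ssm: "submodule S R M" and Snz: "S \<noteq> {\<zero>\<^bsub>M\<^esub>}"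
    and Smin: "\<And>L. submodule L R M \<and> L \<subseteq> S \<longrightarrow> L = {\<zero>\<^bsub>M\<^esub>} \<or> L = S"
    using S unfolding Min_sub_def by auto
  note sS = sm_sub[OF Ssm]
  obtain I where I: "ideal I R" "X = ann_M R M I" using C X unfolding comultiplication_module_def by blast
  obtain J where J: "ideal J R" "Y = ann_M R M J" using C Y unfolding comultiplication_module_def by blast
  from nt obtain s where s: "s \<in> S" "s \<notin> X" by blast
  then obtain a where a: "a \<in> I" "a \<odot>\<^bsub>M\<^esub> s \<noteq> \<zero>\<^bsub>M\<^esub>" using I(2) sS unfolding ann_M_def by blast
  from nt obtain t where t: "t \<in> S" "t \<notin> Y" by blast
  then obtain b where b: "b \<in> J" "b \<odot>\<^bsub>M\<^esub> t \<noteq> \<zero>\<^bsub>M\<^esub>" using J(2) sS unfolding ann_M_def by blast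
  have aR: "a \<in> carrier R" using ideal.Icarr[OF I(1) a(1)] .
  have bR: "b \<in> carrier R" using ideal.Icarr[OF J(1) b(1)] .
  have aSsm: "submodule ((\<lambda>u. a \<odot>\<^bsub>M\<^esub> u) ` S) R M" using img_sm[OF Ssm aR] .
  have aSS: "(\<lambda>u. a \<odot>\<^bsub>M\<^esub> u) ` S \<subseteq> S" using sm_smult[OF Ssm aR] by blast
  have "(\<lambda>u. a \<odot>\<^bsub>M\<^esub> u) ` S \<noteq> {\<zero>\<^bsub>M\<^esub>}" using s(1) a(2) by blast
  hence "(\<lambda>u. a \<odot>\<^bsub>M\<^esub> u) ` S = S" using Smin aSsm aSS by blast
  with t(1) obtain u where u: "u \<in> S" "t = a \<odot>\<^bsub>M\<^esub> u" by blast
  from u(1) sub obtain h k where hk: "u = h \<oplus>\<^bsub>M\<^esub> k" "h \<in> X" "k \<in> Y" unfolding set_add_mem by blast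
  have hc: "h \<in> carrier M" using hk(2) sm_sub[OF X] by blast
  have kc: "k \<in> carrier M" using hk(3) sm_sub[OF Y] by blast
  have ah: "a \<odot>\<^bsub>M\<^esub> h = \<zero>\<^bsub>M\<^esub>" using hk(2) I(2) a(1) unfolding ann_M_def by blast
  have bk: "b \<odot>\<^bsub>M\<^esub> k = \<zero>\<^bsub>M\<^esub>" using hk(3) J(2) b(1) unfolding ann_M_def by blast
  have "b \<odot>\<^bsub>M\<^esub> t = b \<odot>\<^bsub>M\<^esub> (a \<odot>\<^bsub>M\<^esub> h \<oplus>\<^bsub>M\<^esub> a \<odot>\<^bsub>M\<^esub> k)"
    using u(2) hk(1) aR hc kc smult_r_distr by simp
  also have "\<dots> = b \<odot>\<^bsub>M\<^esub> (a \<odot>\<^bsub>M\<^esub> k)" using ah aR kc by simp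
  also have "\<dots> = (b \<otimes>\<^bsub>R\<^esub> a) \<odot>\<^bsub>M\<^esub> k" using aR bR kc smult_assoc1 by simp
  also have "\<dots> = (a \<otimes>\<^bsub>R\<^esub> b) \<odot>\<^bsub>M\<^esub> k" using aR bR R.m_comm by simp
  also have "\<dots> = a \<odot>\<^bsub>M\<^esub> (b \<odot>\<^bsub>M\<^esub> k)" using aR bR kc smult_assoc1 by simp
  also have "\<dots> = \<zero>\<^bsub>M\<^esub>" using bk aR by simp
  finally show False using b(2) by blast
qed

lemma exists_min:
  assumes C: "comultiplication_module R M" and N: "submodule N R M" "N \<noteq> {\<zero>\<^bsub>M\<^esub>}"
  shows "\<exists>S\<in>Min_sub R M. S \<subseteq> N"
proof -
  obtain x where x: "x \<in> N" "x \<noteq> \<zero>\<^bsub>M\<^esub>" using N sm_zero by blast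
  have xc: "x \<in> carrier M" using x N sm_sub by blast
  define A where "A = {P. submodule P R M \<and> x \<notin> P}"
  have "\<exists>P\<in>A. \<forall>Q\<in>A. P \<subseteq> Q \<longrightarrow> Q = P"
  proof (rule subset_Zorn)
    fix Ch assume ch: "subset.chain A Ch"
    show "\<exists>U\<in>A. \<forall>X\<in>Ch. X \<subseteq> U"
    proof (cases "Ch = {}")
      case True thus ?thesis using zero_sm x(2) unfolding A_def by auto
    next
      case False
      have CA: "Ch \<subseteq> A" and tot: "\<And>X Y. X\<in>Ch \<Longrightarrow> Y\<in>Ch \<Longrightarrow> X \<subseteq> Y \<or> Y \<subseteq> X"
        using ch unfolding subset_chain_def by auto
      have "submodule (\<Union>Ch) R M"
      proof (rule submoduleI)
        show "\<Union>Ch \<subseteq> carrier M" using CA sm_sub unfolding A_def by blast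
        show "\<zero>\<^bsub>M\<^esub> \<in> \<Union>Ch" using False CA sm_zero unfolding A_def by blast
        show "\<ominus>\<^bsub>M\<^esub> a \<in> \<Union>Ch" if "a \<in> \<Union>Ch" for a using that CA sm_neg unfolding A_def by blast
        show "a \<oplus>\<^bsub>M\<^esub> b \<in> \<Union>Ch" if "a \<in> \<Union>Ch" "b \<in> \<Union>Ch" for a b
        proof -
          from that obtain P Q where PQ: "P \<in> Ch" "Q \<in> Ch" "a \<in> P" "b \<in> Q" by blast
          have "submodule P R M" "submodule Q R M" using PQ CA unfolding A_def by auto
          thus ?thesis using tot[OF PQ(1,2)] PQ sm_add by blast
        qed
        show "r \<odot>\<^bsub>M\<^esub> a \<in> \<Union>Ch" if "r \<in> carrier R" "a \<in> \<Union>Ch" for r a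
          using that CA sm_smult unfolding A_def by blast
      qed
      moreover have "x \<notin> \<Union>Ch" using CA unfolding A_def by blast
      ultimately show ?thesis unfolding A_def by blast
    qed
  qed
  then obtain P where P: "submodule P R M" "x \<notin> P"
    and Pmax: "\<And>Q. submodule Q R M \<Longrightarrow> x \<notin> Q \<Longrightarrow> P \<subseteq> Q \<Longrightarrow> Q = P" unfolding A_def by blast
  obtain I where I: "ideal I R" "P = ann_M R M I" using C P(1) unfolding comultiplication_module_def by blast
  obtain b where b: "b \<in> I" "b \<odot>\<^bsub>M\<^esub> x \<noteq> \<zero>\<^bsub>M\<^esub>" using P(2) xc I(2) unfolding ann_M_def by blast
  have bR: "b \<in> carrier R" using ideal.Icarr[OF I(1) b(1)] .
  define z where "z = b \<odot>\<^bsub>M\<^esub> x"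
  have zc: "z \<in> carrier M" using bR xc z_def by simp
  define S where "S = (\<lambda>a. a \<odot>\<^bsub>M\<^esub> z) ` carrier R"
  have Ssm: "submodule S R M" using cyc_sm[OF zc] S_def by simp
  have zN: "z \<in> N" using sm_smult[OF N(1) bR x(1)] z_def by simp
  have SN: "S \<subseteq> N" unfolding S_def using sm_smult[OF N(1) _ zN] by blast
  have zS: "z \<in> S" unfolding S_def using zc smult_one[OF zc] by (metis R.one_closed image_eqI)
  have Snz: "S \<noteq> {\<zero>\<^bsub>M\<^esub>}" using zS b(2) z_def by auto
  have "S \<in> Min_sub R M" unfolding Min_sub_def
  proof (intro CollectI conjI allI impI Ssm Snz)
    fix L assume L: "submodule L R M \<and> L \<subseteq> S"
    show "L = {\<zero>\<^bsub>M\<^esub>} \<or> L = S"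
    proof (cases "L = {\<zero>\<^bsub>M\<^esub>}")
      case True thus ?thesis by blast
    next
      case False
      then obtain y where y: "y \<in> L" "y \<noteq> \<zero>\<^bsub>M\<^esub>" using L sm_zero by blast
      then obtain r where r: "r \<in> carrier R" "y = r \<odot>\<^bsub>M\<^esub> z" using L unfolding S_def by blast
      define rx where "rx = r \<odot>\<^bsub>M\<^esub> x"
      have rxc: "rx \<in> carrier M" using r(1) xc rx_def by simp
      have brx: "b \<odot>\<^bsub>M\<^esub> rx = y"
      proof -
        have "b \<odot>\<^bsub>M\<^esub> rx = (b \<otimes>\<^bsub>R\<^esub> r) \<odot>\<^bsub>M\<^esub> x" using rx_def bR r(1) xc smult_assoc1 by simp
        also have "\<dots> = (r \<otimes>\<^bsub>R\<^esub> b) \<odot>\<^bsub>M\<^esub> x" using bR r(1) R.m_comm by simp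
        also have "\<dots> = y" using r z_def bR xc smult_assoc1 by simp
        finally show ?thesis .
      qed
      have rxP: "rx \<notin> P"
      proof
        assume "rx \<in> P"
        hence "b \<odot>\<^bsub>M\<^esub> rx = \<zero>\<^bsub>M\<^esub>" using I(2) b(1) unfolding ann_M_def by blast
        thus False using brx y(2) by simp
      qed
      define Q where "Q = set_add M P ((\<lambda>a. a \<odot>\<^bsub>M\<^esub> rx) ` carrier R)"
      have Csm: "submodule ((\<lambda>a. a \<odot>\<^bsub>M\<^esub> rx) ` carrier R) R M" using cyc_sm[OF rxc] .
      have Qsm: "submodule Q R M" unfolding Q_def using sum_sm[OF P(1) Csm] .
      have PQ: "P \<subseteq> Q" unfolding Q_def using sum_upper1[OF P(1) Csm] .
      have "rx \<in> (\<lambda>a. a \<odot>\<^bsub>M\<^esub> rx) ` carrier R" using smult_one[OF rxc] by (metis R.one_closed image_eqI)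
      hence "rx \<in> Q" unfolding Q_def using sum_upper2[OF P(1) Csm] by blast
      hence "Q \<noteq> P" using rxP by blast
      hence "x \<in> Q" using Pmax[OF Qsm _ PQ] by blast
      then obtain p s where ps: "x = p \<oplus>\<^bsub>M\<^esub> s \<odot>\<^bsub>M\<^esub> rx" "p \<in> P" "s \<in> carrier R"
        unfolding Q_def set_add_mem by blast
      have pc: "p \<in> carrier M" using ps(2) sm_sub[OF P(1)] by blast
      have bp: "b \<odot>\<^bsub>M\<^esub> p = \<zero>\<^bsub>M\<^esub>" using ps(2) I(2) b(1) unfolding ann_M_def by blast
      have "z = b \<odot>\<^bsub>M\<^esub> p \<oplus>\<^bsub>M\<^esub> b \<odot>\<^bsub>M\<^esub> (s \<odot>\<^bsub>M\<^esub> rx)"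
        using z_def ps(1) bR pc ps(3) rxc smult_r_distr by simp
      also have "\<dots> = b \<odot>\<^bsub>M\<^esub> (s \<odot>\<^bsub>M\<^esub> rx)" using bp bR ps(3) rxc by simp
      also have "\<dots> = (b \<otimes>\<^bsub>R\<^esub> s) \<odot>\<^bsub>M\<^esub> rx" using bR ps(3) rxc smult_assoc1 by simp
      also have "\<dots> = (s \<otimes>\<^bsub>R\<^esub> b) \<odot>\<^bsub>M\<^esub> rx" using bR ps(3) R.m_comm by simp
      also have "\<dots> = s \<odot>\<^bsub>M\<^esub> y" using bR ps(3) rxc smult_assoc1 brx by simp
      finally have "z \<in> L" using sm_smult[OF _ ps(3) y(1)] L by simp
      hence "S \<subseteq> L" unfolding S_def using sm_smult L by blast
      thus ?thesis using L by blast
    qed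
  qed
  thus ?thesis using SN by blast
qed

lemma int_sm:
  assumes N: "submodule N R M" and K: "submodule K R M"
  shows "submodule (N \<inter> K) R M"
  apply (rule submoduleI)
  using sm_sub[OF N] sm_zero[OF N] sm_zero[OF K] sm_neg[OF N] sm_neg[OF K]
    sm_add[OF N] sm_add[OF K] sm_smult[OF N] sm_smult[OF K] by auto

lemma nonlarge_sub:
  assumes "submodule N R M" "submodule K R M" "N \<subseteq> K" "\<not> large_submodule R M K"
  shows "\<not> large_submodule R M N"
proof
  assume lN: "large_submodule R M N"
  have "K \<inter> L \<noteq> {\<zero>\<^bsub>M\<^esub>}" if L: "submodule L R M" "L \<noteq> {\<zero>\<^bsub>M\<^esub>}" for L
  proof -
    have "N \<inter> L \<noteq> {\<zero>\<^bsub>M\<^esub>}" using lN L unfolding large_submodule_def by blast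
    moreover have "\<zero>\<^bsub>M\<^esub> \<in> N \<inter> L" using sm_zero assms(1) L(1) by blast
    ultimately obtain y where "y \<in> N \<inter> L" "y \<noteq> \<zero>\<^bsub>M\<^esub>" by blast
    thus ?thesis using assms(3) by blast
  qed
  thus False using assms(2,4) unfolding large_submodule_def by blast
qed

lemma vertex_sub:
  assumes "X \<in> LS_vertices R M" "submodule Y R M" "Y \<subseteq> X" "Y \<noteq> {\<zero>\<^bsub>M\<^esub>}"
  shows "Y \<in> LS_vertices R M"
  using assms nonlarge_sub unfolding LS_vertices_def by blast

lemma sum_eq_sup:
  assumes "submodule X R M" "submodule Y R M" "Y \<subseteq> X"
  shows "set_add M X Y = X" "set_add M Y X = X"
  using sum_least[OF assms(1) order_refl assms(3)] sum_upper1[OF assms(1,2)]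
    sum_least[OF assms(1) assms(3) order_refl] sum_upper2[OF assms(2,1)] by auto

lemma adj_sub:
  assumes "X \<in> LS_vertices R M" "Y \<in> LS_vertices R M" "Y \<subseteq> X" "Y \<noteq> X"
  shows "LS_adj R M X Y" "LS_adj R M Y X"
proof -
  have "submodule X R M" "submodule Y R M" "\<not> large_submodule R M X"
    using assms unfolding LS_vertices_def by auto
  thus "LS_adj R M X Y" "LS_adj R M Y X" using assms sum_eq_sup unfolding LS_adj_def by auto
qed

lemma adj_sym: assumes "LS_adj R M N K" shows "LS_adj R M K N"
proof -
  have "submodule N R M" "submodule K R M" using assms unfolding LS_adj_def LS_vertices_def by auto
  hence "set_add M N K = set_add M K N" by (rule sum_comm)
  thus ?thesis using assms unfolding LS_adj_def by auto
qed

lemma large_iff_min: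
  assumes C: "comultiplication_module R M" and N: "submodule N R M"
  shows "large_submodule R M N \<longleftrightarrow> (\<forall>S\<in>Min_sub R M. S \<subseteq> N)"
proof
  assume l: "large_submodule R M N"
  show "\<forall>S\<in>Min_sub R M. S \<subseteq> N"
  proof
    fix S assume S: "S \<in> Min_sub R M"
    hence Ssm: "submodule S R M" "S \<noteq> {\<zero>\<^bsub>M\<^esub>}" unfolding Min_sub_def by auto
    hence "N \<inter> S \<noteq> {\<zero>\<^bsub>M\<^esub>}" using l unfolding large_submodule_def by blast
    moreover have "submodule (N \<inter> S) R M" using int_sm[OF N Ssm(1)] .
    ultimately have "N \<inter> S = S" using S unfolding Min_sub_def by blast
    thus "S \<subseteq> N" by blast
  qed
next
  assume a: "\<forall>S\<in>Min_sub R M. S \<subseteq> N"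
  show "large_submodule R M N" unfolding large_submodule_def
  proof (intro conjI N allI impI)
    fix L assume L: "submodule L R M \<and> L \<noteq> {\<zero>\<^bsub>M\<^esub>}"
    then obtain S where S: "S \<in> Min_sub R M" "S \<subseteq> L" using exists_min[OF C] by blast
    hence "S \<subseteq> N \<inter> L" "S \<noteq> {\<zero>\<^bsub>M\<^esub>}" using a unfolding Min_sub_def by auto
    moreover have "\<zero>\<^bsub>M\<^esub> \<in> S" using S(1) sm_zero unfolding Min_sub_def by blast
    ultimately show "N \<inter> L \<noteq> {\<zero>\<^bsub>M\<^esub>}" by blast
  qed
qed

lemma not_star:
  "\<not> star_graph (LS_vertices R M) (LS_adj R M)"
proof
  assume "star_graph (LS_vertices R M) (LS_adj R M)"
  then obtain c where c: "c \<in> LS_vertices R M"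
    and E1: "\<And>x. x \<in> LS_vertices R M - {c} \<Longrightarrow> LS_adj R M c x"
    and E2: "\<And>x y. x \<in> LS_vertices R M - {c} \<Longrightarrow> y \<in> LS_vertices R M - {c} \<Longrightarrow> \<not> LS_adj R M x y"
    unfolding star_graph_def by blast
  have csm: "submodule c R M" "c \<noteq> {\<zero>\<^bsub>M\<^esub>}" "\<not> large_submodule R M c"
    using c unfolding LS_vertices_def by auto
  then obtain L where L: "submodule L R M" "L \<noteq> {\<zero>\<^bsub>M\<^esub>}" "c \<inter> L = {\<zero>\<^bsub>M\<^esub>}"
    unfolding large_submodule_def by blast
  have "\<not> large_submodule R M L"
  proof
    assume "large_submodule R M L"
    hence "L \<inter> c \<noteq> {\<zero>\<^bsub>M\<^esub>}" using csm unfolding large_submodule_def by blast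
    thus False using L(3) by (simp add: Int_commute)
  qed
  hence Lv: "L \<in> LS_vertices R M" using L unfolding LS_vertices_def by blast
  have Lc: "L \<noteq> c" using L csm by auto
  hence adj: "LS_adj R M c L" using E1 Lv by blast
  define U where "U = set_add M c L"
  have Usm: "submodule U R M" unfolding U_def using sum_sm[OF csm(1) L(1)] .
  have LU: "L \<subseteq> U" and cU: "c \<subseteq> U" unfolding U_def using sum_upper1 sum_upper2 csm(1) L(1) by auto
  have Unl: "\<not> large_submodule R M U" using adj unfolding LS_adj_def U_def by blast
  have Unz: "U \<noteq> {\<zero>\<^bsub>M\<^esub>}" using LU L(2) sm_zero[OF L(1)] by blast
  have Uv: "U \<in> LS_vertices R M" using Usm Unl Unz unfolding LS_vertices_def by blast
  show False
  proof (cases "U = L")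
    case True
    hence "c \<inter> L = c" using cU by blast
    thus False using L(3) csm(2) by simp
  next
    case False
    hence aLU: "LS_adj R M L U" using adj_sub(2)[OF Uv Lv LU] by blast
    show False
    proof (cases "U = c")
      case True
      hence "c \<inter> L = L" using LU by blast
      thus False using L(3) L(2) by simp
    next
      case False
      thus False using E2[of L U] aLU Lv Uv Lc by blast
    qed
  qed
qed

lemma main_dir:
  assumes C: "comultiplication_module R M" and S: "S \<in> Min_sub R M"
    and T: "T \<in> LS_vertices R M" and ST: "S \<subseteq> T" "S \<noteq> T"
    and v: "v \<in> {S, T}"
    and NB: "\<And>X. X \<in> LS_vertices R M \<Longrightarrow> LS_adj R M v X \<Longrightarrow> X \<in> {S, T}"
  shows "card (Min_sub R M) = 2 \<and>
           (\<exists>V1 V2. two_complete_components (LS_vertices R M) (LS_adj R M) V1 V2 \<and>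
                    (card V1 = 2 \<or> card V2 = 2))"
proof -
  let ?V = "LS_vertices R M"
  have Ssm: "submodule S R M" "S \<noteq> {\<zero>\<^bsub>M\<^esub>}" using S unfolding Min_sub_def by auto
  have Tsm: "submodule T R M" "T \<noteq> {\<zero>\<^bsub>M\<^esub>}" "\<not> large_submodule R M T"
    using T unfolding LS_vertices_def by auto
  have Sv: "S \<in> ?V" using vertex_sub[OF T Ssm(1) ST(1) Ssm(2)] .
  have vV: "v \<in> ?V" using v Sv T by blast
  have vT: "v \<subseteq> T" using v ST by blast
  have vsm: "submodule v R M" using vV unfolding LS_vertices_def by blast
  have TnM: "T \<notin> Min_sub R M" using Ssm ST unfolding Min_sub_def by blast
  obtain L where L: "submodule L R M" "L \<noteq> {\<zero>\<^bsub>M\<^esub>}" "T \<inter> L = {\<zero>\<^bsub>M\<^esub>}"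
    using Tsm unfolding large_submodule_def by blast
  obtain S' where S': "S' \<in> Min_sub R M" "S' \<subseteq> L" using exists_min[OF C L(1,2)] by blast
  have S'sm: "submodule S' R M" "S' \<noteq> {\<zero>\<^bsub>M\<^esub>}" using S'(1) unfolding Min_sub_def by auto
  have S'T: "\<not> S' \<subseteq> T"
  proof
    assume "S' \<subseteq> T"
    hence "S' \<subseteq> T \<inter> L" using S'(2) by blast
    thus False using L(3) S'sm(2) sm_zero[OF S'sm(1)] by blast
  qed
  have S'nl: "\<not> large_submodule R M S'"
  proof
    assume "large_submodule R M S'"
    hence "S \<subseteq> S'" using large_iff_min[OF C S'sm(1)] S by blast
    hence "S \<subseteq> T \<inter> L" using ST S'(2) by blast
    thus False using L(3) Ssm(2) sm_zero[OF Ssm(1)] by blast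
  qed
  have S'v: "S' \<in> ?V" using S'sm S'nl unfolding LS_vertices_def by blast
  have S'ST: "S' \<notin> {S, T}" using S'T ST by blast
  have "\<not> LS_adj R M v S'" using NB[OF S'v] S'ST by blast
  moreover have "v \<noteq> S'" using S'ST v by blast
  ultimately have vS'l: "large_submodule R M (set_add M v S')"
    using vV S'v unfolding LS_adj_def by blast
  have inT: "S'' = S" if S'': "S'' \<in> Min_sub R M" "S'' \<subseteq> T" for S''
  proof -
    have S''sm: "submodule S'' R M" "S'' \<noteq> {\<zero>\<^bsub>M\<^esub>}" using S''(1) unfolding Min_sub_def by auto
    have S''v: "S'' \<in> ?V" using vertex_sub[OF T S''sm(1) S''(2) S''sm(2)] .
    have S''T: "S'' \<noteq> T" using S''(1) TnM by blast
    show ?thesis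
    proof (cases "S'' = v")
      case True thus ?thesis using v S''T by blast
    next
      case False
      have "set_add M v S'' \<subseteq> T" using sum_least[OF Tsm(1) vT S''(2)] .
      hence "\<not> large_submodule R M (set_add M v S'')"
        using nonlarge_sub[OF sum_sm[OF vsm S''sm(1)] Tsm(1) _ Tsm(3)] by blast
      hence "LS_adj R M v S''" using vV S''v False unfolding LS_adj_def by blast
      thus ?thesis using NB[OF S''v] S''T by blast
    qed
  qed
  have MinEq: "Min_sub R M = {S, S'}"
  proof
    show "{S, S'} \<subseteq> Min_sub R M" using S S'(1) by blast
    show "Min_sub R M \<subseteq> {S, S'}"
    proof
      fix S'' assume S'': "S'' \<in> Min_sub R M"
      have S''sm: "submodule S'' R M" "S'' \<noteq> {\<zero>\<^bsub>M\<^esub>}" using S'' unfolding Min_sub_def by auto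
      have "S'' \<subseteq> set_add M v S'"
        using vS'l large_iff_min[OF C sum_sm[OF vsm S'sm(1)]] S'' by blast
      hence "S'' \<subseteq> v \<or> S'' \<subseteq> S'" using min_prime[OF C S'' vsm S'sm(1)] by blast
      thus "S'' \<in> {S, S'}"
      proof
        assume "S'' \<subseteq> v" thus ?thesis using inT[OF S''] vT by blast
      next
        assume "S'' \<subseteq> S'" thus ?thesis using S'(1) S''sm unfolding Min_sub_def by blast
      qed
    qed
  qed
  have SS': "S \<noteq> S'" using S'T ST by blast
  have cardMin: "card (Min_sub R M) = 2" using MinEq SS' by simp
  have lchar: "large_submodule R M N \<longleftrightarrow> S \<subseteq> N \<and> S' \<subseteq> N" if "submodule N R M" for N
    using large_iff_min[OF C that] MinEq by blast
  have gS: "X \<in> {S, T}" if X: "X \<in> ?V" "S \<subseteq> X" for X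
  proof -
    have Xsm: "submodule X R M" "\<not> large_submodule R M X" using X unfolding LS_vertices_def by auto
    have S'X: "\<not> S' \<subseteq> X" using lchar Xsm X(2) by blast
    have "\<not> S' \<subseteq> set_add M v X"
      using min_prime[OF C S'(1) vsm Xsm(1)] S'X S'T vT by blast
    hence nl: "\<not> large_submodule R M (set_add M v X)" using lchar[OF sum_sm[OF vsm Xsm(1)]] by blast
    show ?thesis
    proof (cases "X = v")
      case True thus ?thesis using v by blast
    next
      case False
      hence "LS_adj R M v X" using nl vV X(1) unfolding LS_adj_def by blast
      thus ?thesis using NB[OF X(1)] by blast
    qed
  qed
  have hV2: "S' \<subseteq> X \<and> \<not> S \<subseteq> X" if X: "X \<in> ?V" "X \<notin> {S, T}" for X
  proof -
    have Xsm: "submodule X R M" "X \<noteq> {\<zero>\<^bsub>M\<^esub>}" "\<not> large_submodule R M X"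
      using X unfolding LS_vertices_def by auto
    have nS: "\<not> S \<subseteq> X" using gS X by blast
    obtain S'' where "S'' \<in> Min_sub R M" "S'' \<subseteq> X" using exists_min[OF C Xsm(1,2)] by blast
    hence "S' \<subseteq> X" using MinEq nS by blast
    thus ?thesis using nS by blast
  qed
  have V1V: "{S, T} \<subseteq> ?V" using Sv T by blast
  have "two_complete_components ?V (LS_adj R M) {S, T} (?V - {S, T})"
    unfolding two_complete_components_def
  proof (intro conjI)
    show "{S, T} \<noteq> {}" by blast
    show "?V - {S, T} \<noteq> {}" using S'v S'ST by blast
    show "{S, T} \<inter> (?V - {S, T}) = {}" by blast
    show "{S, T} \<union> (?V - {S, T}) = ?V" using V1V by blast
    show "complete_on {S, T} (LS_adj R M)" unfolding complete_on_def
      using adj_sub[OF T Sv ST] by blast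
    show "complete_on (?V - {S, T}) (LS_adj R M)" unfolding complete_on_def
    proof (intro ballI impI)
      fix x y assume x: "x \<in> ?V - {S, T}" and y: "y \<in> ?V - {S, T}" and xy: "x \<noteq> y"
      have xsm: "submodule x R M" and ysm: "submodule y R M"
        using x y unfolding LS_vertices_def by auto
      have "\<not> S \<subseteq> set_add M x y"
        using min_prime[OF C S xsm ysm] hV2 x y by blast
      hence "\<not> large_submodule R M (set_add M x y)" using lchar[OF sum_sm[OF xsm ysm]] by blast
      thus "LS_adj R M x y" using x y xy unfolding LS_adj_def by blast
    qed
    show "\<forall>x\<in>{S, T}. \<forall>y\<in>?V - {S, T}. \<not> LS_adj R M x y \<and> \<not> LS_adj R M y x"
    proof (intro ballI)
      fix x y assume x: "x \<in> {S, T}" and y: "y \<in> ?V - {S, T}"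
      have xsm: "submodule x R M" and ysm: "submodule y R M"
        using x y V1V unfolding LS_vertices_def by auto
      have Sx: "S \<subseteq> x" using x ST by blast
      have S'y: "S' \<subseteq> y" using hV2 y by blast
      have "large_submodule R M (set_add M x y)"
        using lchar[OF sum_sm[OF xsm ysm]] Sx S'y sum_upper1[OF xsm ysm] sum_upper2[OF xsm ysm] by blast
      hence n1: "\<not> LS_adj R M x y" unfolding LS_adj_def by blast
      hence "\<not> LS_adj R M y x" using adj_sym by blast
      thus "\<not> LS_adj R M x y \<and> \<not> LS_adj R M y x" using n1 by blast
    qed
  qed
  moreover have "card {S, T} = 2" using ST by simp
  ultimately show ?thesis using cardMin by blast
qed

lemma pendent_struct:
  assumes C: "comultiplication_module R M"
    and p: "pendent_vertex (LS_vertices R M) (LS_adj R M) v"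
  shows "\<exists>S T. S \<in> Min_sub R M \<and> T \<in> LS_vertices R M \<and> S \<subseteq> T \<and> S \<noteq> T \<and> v \<in> {S, T} \<and>
     (\<forall>X. X \<in> LS_vertices R M \<and> LS_adj R M v X \<longrightarrow> X \<in> {S, T})"
proof -
  let ?V = "LS_vertices R M"
  from p have vV: "v \<in> ?V" and ex: "\<exists>!w. w \<in> ?V \<and> LS_adj R M v w" unfolding pendent_vertex_def by auto
  then obtain w where w: "w \<in> ?V" "LS_adj R M v w" and uniq: "\<And>u. u \<in> ?V \<Longrightarrow> LS_adj R M v u \<Longrightarrow> u = w"
    by blast
  have vsm: "submodule v R M" "v \<noteq> {\<zero>\<^bsub>M\<^esub>}" using vV unfolding LS_vertices_def by auto
  have wsm: "submodule w R M" "w \<noteq> {\<zero>\<^bsub>M\<^esub>}" using w(1) unfolding LS_vertices_def by auto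
  have vw: "v \<noteq> w" using w(2) unfolding LS_adj_def by blast
  show ?thesis
  proof (cases "\<exists>X. submodule X R M \<and> X \<subseteq> v \<and> X \<noteq> {\<zero>\<^bsub>M\<^esub>} \<and> X \<noteq> v")
    case True
    then obtain X where X: "submodule X R M" "X \<subseteq> v" "X \<noteq> {\<zero>\<^bsub>M\<^esub>}" "X \<noteq> v" by blast
    have Xv: "X \<in> ?V" using vertex_sub[OF vV X(1-3)] .
    have "X = w" using uniq[OF Xv adj_sub(1)[OF vV Xv X(2,4)]] .
    hence wv: "w \<subseteq> v" "w \<noteq> v" using X by auto
    have "w \<in> Min_sub R M" unfolding Min_sub_def
    proof (intro CollectI conjI allI impI wsm)
      fix L assume L: "submodule L R M \<and> L \<subseteq> w"
      show "L = {\<zero>\<^bsub>M\<^esub>} \<or> L = w"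
      proof (rule ccontr)
        assume n: "\<not> (L = {\<zero>\<^bsub>M\<^esub>} \<or> L = w)"
        have Lv: "L \<in> ?V" using vertex_sub[OF vV] L wv n by blast
        have "L \<noteq> v" using L wv by blast
        hence "L = w" using uniq[OF Lv adj_sub(1)[OF vV Lv]] L wv by blast
        thus False using n by blast
      qed
    qed
    thus ?thesis using wv vV uniq by blast
  next
    case False
    hence vmin: "v \<in> Min_sub R M" using vsm unfolding Min_sub_def by blast
    define U where "U = set_add M v w"
    have Usm: "submodule U R M" unfolding U_def using sum_sm[OF vsm(1) wsm(1)] .
    have vU: "v \<subseteq> U" and wU: "w \<subseteq> U" unfolding U_def using sum_upper1 sum_upper2 vsm(1) wsm(1) by auto
    have Unl: "\<not> large_submodule R M U" using w(2) unfolding LS_adj_def U_def by blast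
    have Unz: "U \<noteq> {\<zero>\<^bsub>M\<^esub>}" using vU vsm(2) sm_zero[OF vsm(1)] by blast
    have Uv: "U \<in> ?V" using Usm Unl Unz unfolding LS_vertices_def by blast
    show ?thesis
    proof (cases "U = v")
      case True
      hence "w \<subseteq> v" using wU by blast
      thus ?thesis using False wsm vw by blast
    next
      case Uv': False
      have "U = w" using uniq[OF Uv adj_sub(2)[OF Uv vV vU]] Uv' by blast
      hence "v \<subseteq> w" using vU by blast
      thus ?thesis using vmin w(1) vw uniq by blast
    qed
  qed
qed

end

lemma comp_pendent:
  assumes tc: "two_complete_components V E V1 V2" and c: "card V1 = 2 \<or> card V2 = 2"
    and irr: "\<And>x. \<not> E x x"
  shows "\<exists>v. pendent_vertex V E v"
proof -
  have gen: "\<exists>v. pendent_vertex V E v" if tc': "two_complete_components V E A B" and cA: "card A = 2" for A B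
  proof -
    obtain a b where ab: "A = {a, b}" "a \<noteq> b" using cA unfolding card_2_iff by blast
    have d: "A \<inter> B = {}" "A \<union> B = V" "complete_on A E" "\<forall>x\<in>A. \<forall>y\<in>B. \<not> E x y \<and> \<not> E y x"
      using tc' unfolding two_complete_components_def by auto
    have aV: "a \<in> V" using ab d by blast
    have bE: "b \<in> V \<and> E a b" using ab d unfolding complete_on_def by blast
    have un: "y = b" if y: "y \<in> V \<and> E a y" for y
    proof (cases "y \<in> A")
      case True
      thus ?thesis using ab y irr by blast
    next
      case False
      thus ?thesis using y d ab by blast
    qed
    have "\<exists>!w. w \<in> V \<and> E a w" using bE un by (intro ex1I[of _ b])
    hence "pendent_vertex V E a" unfolding pendent_vertex_def using aV by blast
    thus ?thesis by blast
  qed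
  show ?thesis
  proof (cases "card V1 = 2")
    case True thus ?thesis using gen tc by blast
  next
    case False
    hence "card V2 = 2" using c by blast
    moreover have "two_complete_components V E V2 V1" using tc unfolding two_complete_components_def by blast
    ultimately show ?thesis using gen by blast
  qed
qed

theorem theorem2p12:
  fixes R :: "('a, 'b) ring_scheme" and M :: "('a, 'c, 'd) module_scheme"
  assumes "cring R" and "module R M"
    and "carrier M \<noteq> {\<zero>\<^bsub>M\<^esub>}"
    and "comultiplication_module R M"
    and "non_null_graph (LS_vertices R M)"
  shows "((\<exists>v. pendent_vertex (LS_vertices R M) (LS_adj R M) v) \<longleftrightarrow>
           card (Min_sub R M) = 2 \<and>
           (\<exists>V1 V2. two_complete_components (LS_vertices R M) (LS_adj R M) V1 V2 \<and>
                    (card V1 = 2 \<or> card V2 = 2)))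
       \<and> \<not> star_graph (LS_vertices R M) (LS_adj R M)"
proof (intro conjI)
  show "\<not> star_graph (LS_vertices R M) (LS_adj R M)" using module.not_star[OF assms(2)] .
  show "(\<exists>v. pendent_vertex (LS_vertices R M) (LS_adj R M) v) \<longleftrightarrow>
           card (Min_sub R M) = 2 \<and>
           (\<exists>V1 V2. two_complete_components (LS_vertices R M) (LS_adj R M) V1 V2 \<and>
                    (card V1 = 2 \<or> card V2 = 2))"
  proof
    assume "\<exists>v. pendent_vertex (LS_vertices R M) (LS_adj R M) v"
    then obtain v where pv: "pendent_vertex (LS_vertices R M) (LS_adj R M) v" by blast
    obtain S T where ST0: "S \<in> Min_sub R M \<and> T \<in> LS_vertices R M \<and> S \<subseteq> T \<and> S \<noteq> T \<and> v \<in> {S, T} \<and>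
      (\<forall>X. X \<in> LS_vertices R M \<and> LS_adj R M v X \<longrightarrow> X \<in> {S, T})"
      using module.pendent_struct[OF assms(2) assms(4) pv] by (elim exE)
    have ST: "S \<in> Min_sub R M" "T \<in> LS_vertices R M" "S \<subseteq> T" "S \<noteq> T" "v \<in> {S, T}"
      "\<forall>X. X \<in> LS_vertices R M \<and> LS_adj R M v X \<longrightarrow> X \<in> {S, T}"
      using ST0 by simp_all
    show "card (Min_sub R M) = 2 \<and>
           (\<exists>V1 V2. two_complete_components (LS_vertices R M) (LS_adj R M) V1 V2 \<and>
                    (card V1 = 2 \<or> card V2 = 2))"
    proof -
      have NB: "\<And>X. X \<in> LS_vertices R M \<Longrightarrow> LS_adj R M v X \<Longrightarrow> X \<in> {S, T}" using ST(6) by blast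
      show ?thesis using module.main_dir[OF assms(2) assms(4) ST(1-5) NB] .
    qed
  next
    assume "card (Min_sub R M) = 2 \<and>
           (\<exists>V1 V2. two_complete_components (LS_vertices R M) (LS_adj R M) V1 V2 \<and>
                    (card V1 = 2 \<or> card V2 = 2))"
    then obtain V1 V2 where tc: "two_complete_components (LS_vertices R M) (LS_adj R M) V1 V2"
      and c: "card V1 = 2 \<or> card V2 = 2" by blast
    have irr: "\<And>x. \<not> LS_adj R M x x" unfolding LS_adj_def by blast
    show "\<exists>v. pendent_vertex (LS_vertices R M) (LS_adj R M) v" using comp_pendent[OF tc c irr] .
  qed
qed

end
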